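(* Fix $0<q<1$ and $t\in\mathbb R$. The collection of distributions $G\in\mathcal G$ satisfying $T_q(G)=t$ is convex, and the collection of distributions $G\in\mathcal G$ satisfying $T_q(G)\ge t$ is convex.
   Context: $E(t)=1-e^{-t}$, $\bar E=1-E$, $\bar G=1-G$. $\mathcal G=\{E\#F:F$ a probability distribution on $[1,\infty)\}$ with $(E\#F)(t)=\int E(t/\mu)\,dF(\mu)$. FDR functional $T_q(G)=\inf\{t:\bar G(t)\ge\frac1q\bar E(t)\}$ (with $\inf\emptyset=+\infty$). *)

theory Defs
  imports "HOL-Probability.Probability"
begin

definition Eexp :: "real \<Rightarrow> real" where
  "Eexp t = 1 - exp (- t)"

definition scale_mix :: "real measure \<Rightarrow> real \<Rightarrow> real" where
  "scale_mix F t = (\<integral>\<mu>. Eexp (t / \<mu>) \<partial>F)"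

definition mixing_dist :: "real measure \<Rightarrow> bool" where
  "mixing_dist F \<longleftrightarrow> prob_space F \<and> sets F = sets borel \<and> measure F {1..} = 1"

definition GG :: "(real \<Rightarrow> real) set" where
  "GG = {G. \<exists>F. mixing_dist F \<and> G = scale_mix F}"

text \<open>FDR functional T_q(G) = inf{t. 1 - G t \<ge> (1/q)(1 - E t)}, with inf of the empty set = +infinity.\<close>
definition Tq :: "real \<Rightarrow> (real \<Rightarrow> real) \<Rightarrow> ereal" where
  "Tq q G = Inf {ereal s | s. 1 - G s \<ge> (1 / q) * (1 - Eexp s)}"

definition fun_convex :: "(real \<Rightarrow> real) set \<Rightarrow> bool" where
  "fun_convex S \<longleftrightarrow> (\<forall>G1\<in>S. \<forall>G2\<in>S. \<forall>a::real. 0 \<le> a \<and> a \<le> 1 \<longrightarrow>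
      (\<lambda>s. a * G1 s + (1 - a) * G2 s) \<in> S)"

end

theory Submission
  imports Defs
begin

lemma mix_meas:
  assumes "mixing_dist F"
  shows "(f::real\<Rightarrow>real) \<in> borel_measurable borel \<Longrightarrow> f \<in> borel_measurable F"
proof -
  assume f: "f \<in> borel_measurable borel"
  have "sets F = sets borel" using assms unfolding mixing_dist_def by blast
  then have "borel_measurable F = (borel_measurable borel :: (real \<Rightarrow> real) set)"
    by (rule measurable_cong_sets) (rule refl)
  then show ?thesis using f by simp
qed

lemma mix_AE:
  assumes "mixing_dist F"
  shows "AE \<mu> in F. 1 \<le> \<mu>"
proof -
  interpret prob_space F using assms by (simp add: mixing_dist_def)
  have "AE \<mu> in F. \<mu> \<in> {1..}"
    using assms by (intro AE_prob_1) (auto simp: mixing_dist_def)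
  then show ?thesis by auto
qed

lemma sm_trunc:
  assumes "mixing_dist F"
  shows "scale_mix F s = (\<integral>\<mu>. Eexp (s / max 1 \<mu>) \<partial>F)"
  unfolding scale_mix_def
  by (rule integral_cong_AE) (auto intro!: mix_meas[OF assms] eventually_mono[OF mix_AE[OF assms]] simp: max_def Eexp_def)

lemma bnd: "\<bar>Eexp (s / max 1 \<mu>)\<bar> \<le> 1 + exp \<bar>s::real\<bar>"
proof -
  have "\<bar>s\<bar> / max 1 \<mu> \<le> \<bar>s\<bar> / 1"
    using mult_left_mono[of 1 "max 1 \<mu>" "\<bar>s\<bar>"] by (simp add: divide_le_eq)
  then have "\<bar>s / max 1 \<mu>\<bar> \<le> \<bar>s\<bar>"
    by (simp add: abs_div)
  moreover have "- (s / max 1 \<mu>) \<le> \<bar>s / max 1 \<mu>\<bar>" by linarith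
  ultimately have "exp (- (s / max 1 \<mu>)) \<le> exp \<bar>s\<bar>" by simp
  moreover have "0 < exp (- (s / max 1 \<mu>))" by simp
  ultimately show ?thesis unfolding Eexp_def by linarith
qed

lemma bnd2: "\<bar>exp (- (s / max 1 \<mu>))\<bar> \<le> exp \<bar>s::real\<bar>"
proof -
  have "\<bar>s\<bar> / max 1 \<mu> \<le> \<bar>s\<bar> / 1"
    using mult_left_mono[of 1 "max 1 \<mu>" "\<bar>s\<bar>"] by (simp add: divide_le_eq)
  then have "\<bar>s / max 1 \<mu>\<bar> \<le> \<bar>s\<bar>"
    by (simp add: abs_div)
  then have "- (s / max 1 \<mu>) \<le> \<bar>s\<bar>"
    by (metis minus_divide_left abs_ge_minus_self order_trans)
  then show ?thesis by simp
qed


lemma g_meas: "(\<lambda>\<mu>. Eexp (s / max 1 \<mu>)) \<in> borel_measurable borel"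
  unfolding Eexp_def by measurable

lemma h_meas: "(\<lambda>\<mu>::real. exp (- (s / max 1 \<mu>))) \<in> borel_measurable borel"
  by measurable

lemma h_int:
  assumes "mixing_dist F"
  shows "integrable F (\<lambda>\<mu>. exp (- (s / max 1 \<mu>)))"
proof -
  interpret prob_space F using assms by (simp add: mixing_dist_def)
  show ?thesis
    by (rule integrable_const_bound[where B="exp \<bar>s\<bar>"])
       (use bnd2 in \<open>auto intro!: mix_meas[OF assms] h_meas\<close>)
qed

lemma one_minus:
  assumes "mixing_dist F"
  shows "1 - scale_mix F s = (\<integral>\<mu>. exp (- (s / max 1 \<mu>)) \<partial>F)"
proof -
  interpret prob_space F using assms by (simp add: mixing_dist_def)
  have "scale_mix F s = (\<integral>\<mu>. 1 - exp (- (s / max 1 \<mu>)) \<partial>F)"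
    unfolding sm_trunc[OF assms] Eexp_def ..
  also have "\<dots> = 1 - (\<integral>\<mu>. exp (- (s / max 1 \<mu>)) \<partial>F)"
    by (subst Bochner_Integration.integral_diff) (auto intro: h_int[OF assms] simp: prob_space)
  finally show ?thesis by simp
qed

lemma upclosed:
  assumes "mixing_dist F" "s \<le> s'" "(1/q) * (1 - Eexp s) \<le> 1 - scale_mix F s"
  shows "(1/q) * (1 - Eexp s') \<le> 1 - scale_mix F s'"
proof -
  interpret prob_space F using assms by (simp add: mixing_dist_def)
  have pw: "exp (s - s') * exp (- (s / max 1 \<mu>)) \<le> exp (- (s' / max 1 \<mu>))" for \<mu>
  proof -
    have m1: "1 \<le> max 1 \<mu>" by simp
    have "(s' - s) / max 1 \<mu> \<le> (s' - s) / 1"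
      using m1 assms(2) by (intro divide_left_mono) auto
    moreover have "s' / max 1 \<mu> = (s' - s) / max 1 \<mu> + s / max 1 \<mu>"
      by (simp add: diff_divide_distrib)
    ultimately have "s - s' + - (s / max 1 \<mu>) \<le> - (s' / max 1 \<mu>)" by simp
    then show ?thesis by (simp add: exp_add[symmetric])
  qed
  have "exp (s - s') * (1 - scale_mix F s) = (\<integral>\<mu>. exp (s - s') * exp (- (s / max 1 \<mu>)) \<partial>F)"
    by (simp add: one_minus[OF assms(1)])
  also have "\<dots> \<le> (\<integral>\<mu>. exp (- (s' / max 1 \<mu>)) \<partial>F)"
    by (rule integral_mono) (auto intro: h_int[OF assms(1)] pw)
  also have "\<dots> = 1 - scale_mix F s'" by (simp add: one_minus[OF assms(1)])
  finally have A: "exp (s - s') * (1 - scale_mix F s) \<le> 1 - scale_mix F s'" .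
  have "(1/q) * (1 - Eexp s') = exp (s - s') * ((1/q) * (1 - Eexp s))"
    by (simp add: Eexp_def exp_add[symmetric])
  also have "\<dots> \<le> exp (s - s') * (1 - scale_mix F s)"
    using assms(3) by (intro mult_left_mono) auto
  finally show ?thesis using A by linarith
qed

lemma upGG:
  assumes "G \<in> GG" "s \<le> s'" "(1/q) * (1 - Eexp s) \<le> 1 - G s"
  shows "(1/q) * (1 - Eexp s') \<le> 1 - G s'"
  using assms upclosed unfolding GG_def by blast

lemma mixGG:
  assumes "G1 \<in> GG" "G2 \<in> GG" "0 \<le> a" "a \<le> 1"
  shows "(\<lambda>s. a * G1 s + (1 - a) * G2 s) \<in> GG"
proof -
  obtain F1 F2 where F1: "mixing_dist F1" "G1 = scale_mix F1" and F2: "mixing_dist F2" "G2 = scale_mix F2"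
    using assms unfolding GG_def by blast
  define p where "p = bernoulli_pmf a"
  define N where "N = (\<lambda>b. if b then F1 else F2)"
  define F where "F = measure_pmf p \<bind> N"
  have Npr: "prob_space (N b)" "sets (N b) = sets borel" "measure (N b) {1..} = 1" for b
    using F1 F2 unfolding N_def mixing_dist_def by auto
  have Nsp: "N b \<in> space (subprob_algebra borel)" for b
    unfolding space_subprob_algebra by (auto intro: prob_space_imp_subprob_space Npr(1) simp: Npr(2))
  have Nm: "N \<in> measurable (measure_pmf p) (subprob_algebra borel)"
    using Nsp by simp
  have sF: "sets F = sets borel"
    unfolding F_def by (rule sets_bind) (auto simp: Npr)
  have pF: "prob_space F"
    unfolding F_def by (rule prob_space.prob_space_bind[OF prob_space_measure_pmf _ Nm]) (auto simp: Npr)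
  have "measure F {1..} = (\<integral>b. measure (N b) {1..} \<partial>measure_pmf p)"
    unfolding F_def by (rule measure_pmf.measure_bind[OF Nm]) simp
  also have "\<dots> = 1" by (simp add: Npr)
  finally have mF: "mixing_dist F" using sF pF unfolding mixing_dist_def by simp
  have "scale_mix F s = a * G1 s + (1 - a) * G2 s" for s
  proof -
    have "scale_mix F s = (\<integral>\<mu>. Eexp (s / max 1 \<mu>) \<partial>F)" by (rule sm_trunc[OF mF])
    also have "\<dots> = (\<integral>b. (\<integral>\<mu>. Eexp (s / max 1 \<mu>) \<partial>N b) \<partial>measure_pmf p)"
      unfolding F_def
      by (rule integral_bind[where K=borel and B="1 + exp \<bar>s\<bar>" and B'=1])
         (auto intro: g_meas bnd Nm Nsp prob_space.finite_measure prob_space_measure_pmf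
               simp: Npr prob_space.emeasure_space_1)
    also have "\<dots> = (\<Sum>b\<in>UNIV. (\<integral>\<mu>. Eexp (s / max 1 \<mu>) \<partial>N b) * pmf p b)"
      by (rule integral_measure_pmf_real) auto
    also have "\<dots> = a * G1 s + (1 - a) * G2 s"
      using assms(3,4) by (simp add: UNIV_bool N_def p_def F1 F2 sm_trunc)
    finally show ?thesis .
  qed
  then show ?thesis using mF unfolding GG_def by (auto intro!: exI[of _ F])
qed

lemma conv_ge:
  fixes a x y c :: real
  assumes "0 \<le> a" "a \<le> 1" "c \<le> x" "c \<le> y"
  shows "c \<le> a * x + (1 - a) * y"
proof -
  have "a * c \<le> a * x" "(1 - a) * c \<le> (1 - a) * y"
    using assms by (auto intro: mult_left_mono)
  then show ?thesis by (simp add: algebra_simps)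
qed

lemma conv_lt:
  fixes a x y c :: real
  assumes "0 \<le> a" "a \<le> 1" "x < c" "y < c"
  shows "a * x + (1 - a) * y < c"
proof (cases "a = 0")
  case True then show ?thesis using assms by simp
next
  case False
  then have "a * x < a * c" using assms by (intro mult_strict_left_mono) auto
  moreover have "(1 - a) * y \<le> (1 - a) * c" using assms by (intro mult_left_mono) auto
  ultimately show ?thesis by (simp add: algebra_simps)
qed

lemma Tq_ge_iff:
  "ereal t \<le> Tq q G \<longleftrightarrow> (\<forall>s. (1/q) * (1 - Eexp s) \<le> 1 - G s \<longrightarrow> t \<le> s)"
  unfolding Tq_def by (auto simp: le_Inf_iff)

lemma Tq_le:
  assumes "(1/q) * (1 - Eexp s) \<le> 1 - G s"
  shows "Tq q G \<le> ereal s"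
  unfolding Tq_def using assms by (auto intro: Inf_lower)

lemma Tq_lt:
  assumes "Tq q G < ereal r"
  shows "\<exists>s. s < r \<and> (1/q) * (1 - Eexp s) \<le> 1 - G s"
  using assms unfolding Tq_def by (auto simp: Inf_less_iff)

theorem lemma4p2:
  fixes q t :: real
  assumes "0 < q" and "q < 1"
  shows "fun_convex {G \<in> GG. Tq q G = ereal t} \<and> fun_convex {G \<in> GG. Tq q G \<ge> ereal t}"
proof -
  have mixP: "(1/q) * (1 - Eexp s) \<le> 1 - G1 s \<or> (1/q) * (1 - Eexp s) \<le> 1 - G2 s"
    if "(1/q) * (1 - Eexp s) \<le> 1 - (a * G1 s + (1 - a) * G2 s)" "0 \<le> a" "a \<le> 1"
    for G1 G2 :: "real \<Rightarrow> real" and a s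
  proof (rule ccontr)
    assume "\<not> ?thesis"
    then have "a * (1 - G1 s) + (1 - a) * (1 - G2 s) < (1/q) * (1 - Eexp s)"
      using that by (intro conv_lt) auto
    then show False using that by (simp add: algebra_simps)
  qed
  have Pmix: "(1/q) * (1 - Eexp s) \<le> 1 - (a * G1 s + (1 - a) * G2 s)"
    if "(1/q) * (1 - Eexp s) \<le> 1 - G1 s" "(1/q) * (1 - Eexp s) \<le> 1 - G2 s" "0 \<le> a" "a \<le> 1"
    for G1 G2 :: "real \<Rightarrow> real" and a s
  proof -
    have "(1/q) * (1 - Eexp s) \<le> a * (1 - G1 s) + (1 - a) * (1 - G2 s)"
      using that by (intro conv_ge) auto
    then show ?thesis by (simp add: algebra_simps)
  qed
  have ge: "ereal t \<le> Tq q (\<lambda>s. a * G1 s + (1 - a) * G2 s)"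
    if "ereal t \<le> Tq q G1" "ereal t \<le> Tq q G2" "0 \<le> a" "a \<le> 1"
    for G1 G2 :: "real \<Rightarrow> real" and a
    using that mixP unfolding Tq_ge_iff by blast
  have le: "Tq q (\<lambda>s. a * G1 s + (1 - a) * G2 s) \<le> ereal t"
    if "G1 \<in> GG" "G2 \<in> GG" "Tq q G1 = ereal t" "Tq q G2 = ereal t" "0 \<le> a" "a \<le> 1"
    for G1 G2 :: "real \<Rightarrow> real" and a
  proof (rule dense_ge)
    fix x assume "ereal t < x"
    then obtain r where r: "ereal t < ereal r" "ereal r < x" using ereal_dense2 by blast
    have P1: "(1/q) * (1 - Eexp r) \<le> 1 - G1 r"
    proof -
      have "Tq q G1 < ereal r" using that r by simp
      then obtain s where "s < r" "(1/q) * (1 - Eexp s) \<le> 1 - G1 s"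
        using Tq_lt[of q G1 r] by blast
      then show ?thesis using upGG[OF that(1), of s r q] by simp
    qed
    have P2: "(1/q) * (1 - Eexp r) \<le> 1 - G2 r"
    proof -
      have "Tq q G2 < ereal r" using that r by simp
      then obtain s where "s < r" "(1/q) * (1 - Eexp s) \<le> 1 - G2 s"
        using Tq_lt[of q G2 r] by blast
      then show ?thesis using upGG[OF that(2), of s r q] by simp
    qed
    have "Tq q (\<lambda>s. a * G1 s + (1 - a) * G2 s) \<le> ereal r"
      by (rule Tq_le) (use Pmix[of r G1 G2 a, OF P1 P2] that in auto)
    then show "Tq q (\<lambda>s. a * G1 s + (1 - a) * G2 s) \<le> x" using r by simp
  qed
  show ?thesis
    unfolding fun_convex_def
    using mixGG ge le by (auto intro!: antisym)
qed

end
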